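(* Let $X$ be an infinite-dimensional complex Banach space, and let $(S(z))_{z\in\mathbb{C}}$ be an entire $C$-regularized group on $X$ with $C$ of dense range. Let $x\in X$ be a supercyclic vector for $\{S(z):z\in\mathbb{C}\}$. Then: (1) $S(z)x\neq0$ for all $z\in\mathbb{C}$; (2) for every $\omega_0\in\mathbb{C}$, the set $\{\alpha S(z)x:\alpha,z\in\mathbb{C},\ |z|>|\omega_0|\}$ is dense in $X$.
   Context: An entire $C$-regularized group is a family $(S(z))_{z\in\mathbb{C}}$ of bounded operators on $X$ satisfying three conditions: $S(0)=C$; $S(z+w)C=S(z)S(w)$ for all $z,w\in\mathbb{C}$; and $z\mapsto S(z)x$ is entire for every $x\in X$. A vector $x$ is supercyclic for $\{S(z):z\in\mathbb{C}\}$ if $\{\alpha S(z)x:\alpha,z\in\mathbb{C}\}$ is dense in $X$. *)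

theory Defs
  imports "HOL-Analysis.Analysis"
begin

text \<open>A complex Banach space is modelled as a real Banach space (type class banach)
  together with a complex scalar multiplication cs compatible with the real one
  and with the norm.\<close>
definition complex_scalar :: "(complex \<Rightarrow> 'a::banach \<Rightarrow> 'a) \<Rightarrow> bool" where
  "complex_scalar cs \<longleftrightarrow>
     (\<forall>r x. cs (complex_of_real r) x = r *\<^sub>R x) \<and>
     (\<forall>a b x. cs (a * b) x = cs a (cs b x)) \<and>
     (\<forall>a b x. cs (a + b) x = cs a x + cs b x) \<and>
     (\<forall>a x y. cs a (x + y) = cs a x + cs a y) \<and>
     (\<forall>a x. norm (cs a x) = cmod a * norm x)"

definition infinite_dim_c :: "(complex \<Rightarrow> 'a::banach \<Rightarrow> 'a) \<Rightarrow> bool" where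
  "infinite_dim_c cs \<longleftrightarrow>
     \<not> (\<exists>B. finite B \<and> (\<forall>x. \<exists>c. x = (\<Sum>b\<in>B. cs (c b) b)))"

definition bounded_clinear_op :: "(complex \<Rightarrow> 'a::banach \<Rightarrow> 'a) \<Rightarrow> ('a \<Rightarrow> 'a) \<Rightarrow> bool" where
  "bounded_clinear_op cs T \<longleftrightarrow> bounded_linear T \<and> (\<forall>a x. T (cs a x) = cs a (T x))"

definition cdifferentiable_at :: "(complex \<Rightarrow> 'a::banach \<Rightarrow> 'a) \<Rightarrow> (complex \<Rightarrow> 'a) \<Rightarrow> complex \<Rightarrow> bool" where
  "cdifferentiable_at cs f z0 \<longleftrightarrow>
     (\<exists>v. ((\<lambda>h. cs (inverse h) (f (z0 + h) - f z0)) \<longlongrightarrow> v) (at 0))"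

definition entire_v :: "(complex \<Rightarrow> 'a::banach \<Rightarrow> 'a) \<Rightarrow> (complex \<Rightarrow> 'a) \<Rightarrow> bool" where
  "entire_v cs f \<longleftrightarrow> (\<forall>z. cdifferentiable_at cs f z)"

definition entire_C_reg_group ::
  "(complex \<Rightarrow> 'a::banach \<Rightarrow> 'a) \<Rightarrow> ('a \<Rightarrow> 'a) \<Rightarrow> (complex \<Rightarrow> 'a \<Rightarrow> 'a) \<Rightarrow> bool" where
  "entire_C_reg_group cs C S \<longleftrightarrow>
     bounded_clinear_op cs C \<and> (\<forall>z. bounded_clinear_op cs (S z)) \<and>
     S 0 = C \<and>
     (\<forall>z w. S (z + w) \<circ> C = S z \<circ> S w) \<and>
     (\<forall>x. entire_v cs (\<lambda>z. S z x))"

definition supercyclic_vec ::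
  "(complex \<Rightarrow> 'a::banach \<Rightarrow> 'a) \<Rightarrow> (complex \<Rightarrow> 'a \<Rightarrow> 'a) \<Rightarrow> 'a \<Rightarrow> bool" where
  "supercyclic_vec cs S x \<longleftrightarrow> closure {cs \<alpha> (S z x) | \<alpha> z. True} = UNIV"

end

theory Submission
  imports Defs
begin


lemma cs_bilinear:
  assumes "complex_scalar cs"
  shows "bounded_bilinear cs"
proof -
  note d = assms[unfolded complex_scalar_def]
  show ?thesis
  proof
    fix a a' :: complex and b b' :: 'a and r :: real
    show "cs (a + a') b = cs a b + cs a' b" using d by blast
    show "cs a (b + b') = cs a b + cs a b'" using d by blast
    show "cs (r *\<^sub>R a) b = r *\<^sub>R cs a b"
      using d by (metis scaleR_conv_of_real)
    have "cs a (r *\<^sub>R b) = cs a (cs (complex_of_real r) b)" using d by metis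
    also have "\<dots> = cs (complex_of_real r * a) b" using d by (metis mult.commute)
    also have "\<dots> = r *\<^sub>R cs a b" using d by metis
    finally show "cs a (r *\<^sub>R b) = r *\<^sub>R cs a b" .
    show "\<exists>K. \<forall>a b. norm (cs a b) \<le> norm a * norm b * K"
      by (rule exI[of _ 1]) (simp add: d)
  qed
qed

lemma cs_one: "complex_scalar cs \<Longrightarrow> cs 1 w = w"
  unfolding complex_scalar_def by (metis of_real_1 scaleR_one)

lemma cont_f:
  assumes cs: "complex_scalar cs" and e: "entire_v cs f"
  shows "continuous_on UNIV f"
proof (rule continuous_at_imp_continuous_on, intro ballI)
  fix z0 :: complex
  interpret bb: bounded_bilinear cs using cs_bilinear[OF cs] .
  obtain v where v: "((\<lambda>h. cs (inverse h) (f (z0 + h) - f z0)) \<longlongrightarrow> v) (at 0)"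
    using e unfolding entire_v_def cdifferentiable_at_def by blast
  have "((\<lambda>h. cs h (cs (inverse h) (f (z0 + h) - f z0))) \<longlongrightarrow> cs 0 v) (at 0)"
    by (rule bb.tendsto[OF tendsto_ident_at v])
  hence l: "((\<lambda>h. cs h (cs (inverse h) (f (z0 + h) - f z0))) \<longlongrightarrow> 0) (at 0)"
    by (simp add: bb.zero_left)
  have ev: "\<forall>\<^sub>F h in at 0. cs h (cs (inverse h) (f (z0 + h) - f z0)) = f (z0 + h) - f z0"
    unfolding eventually_at_filter
  proof (intro always_eventually allI impI)
    fix h :: complex assume "h \<noteq> 0"
    have "cs h (cs (inverse h) (f (z0 + h) - f z0)) = cs (h * inverse h) (f (z0 + h) - f z0)"
      using cs unfolding complex_scalar_def by metis
    also have "\<dots> = f (z0 + h) - f z0" using \<open>h \<noteq> 0\<close> cs_one[OF cs] by simp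
    finally show "cs h (cs (inverse h) (f (z0 + h) - f z0)) = f (z0 + h) - f z0" .
  qed
  have "((\<lambda>h. f (z0 + h) - f z0) \<longlongrightarrow> 0) (at 0)"
    using Lim_transform_eventually[OF l ev] .
  hence "((\<lambda>h. f (z0 + h)) \<longlongrightarrow> f z0) (at 0)"
    by (rule LIM_zero_cancel)
  hence "(f \<longlongrightarrow> f z0) (at z0)"
    by (simp add: LIM_offset_zero_iff[symmetric])
  thus "isCont f z0" by (simp add: isCont_def)
qed



lemma closed_span_finite:
  fixes B :: "'a::real_normed_vector set"
  assumes "finite B" shows "closed (span B)"
  using assms
proof (induction B rule: finite_induct)
  case empty then show ?case by simp
next
  case (insert b B)
  show ?case
  proof (cases "b \<in> span B")
    case True then show ?thesis using insert by (simp add: span_redundant)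
  next
    case False
    define \<delta> where "\<delta> = infdist b (span B)"
    have dpos: "\<delta> > 0" unfolding \<delta>_def
      using insert.IH False span_zero[of B]
      by (metis empty_iff in_closed_iff_infdist_zero infdist_nonneg order_le_less)
    have key: "\<bar>t\<bar> * \<delta> \<le> norm (t *\<^sub>R b + v)" if "v \<in> span B" for t v
    proof (cases "t = 0")
      case True then show ?thesis by simp
    next
      case False
      have w: "- ((1/t) *\<^sub>R v) \<in> span B" using that by (simp add: span_neg span_scale)
      have "\<delta> \<le> dist b (- ((1/t) *\<^sub>R v))" unfolding \<delta>_def by (rule infdist_le[OF w])
      also have "\<dots> = norm (b + (1/t) *\<^sub>R v)" by (simp add: dist_norm)
      finally have "\<bar>t\<bar> * \<delta> \<le> \<bar>t\<bar> * norm (b + (1/t) *\<^sub>R v)"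
        by (simp add: mult_left_mono)
      also have "\<dots> = norm (t *\<^sub>R (b + (1/t) *\<^sub>R v))" by simp
      also have "t *\<^sub>R (b + (1/t) *\<^sub>R v) = t *\<^sub>R b + v" using False
        by (simp add: scaleR_add_right)
      finally show ?thesis .
    qed
    show ?thesis unfolding closed_sequential_limits
    proof (intro allI impI, elim conjE)
      fix s l assume sin: "\<forall>n. s n \<in> span (insert b B)" and sl: "s \<longlonglongrightarrow> l"
      have "\<forall>n. \<exists>k. s n - k *\<^sub>R b \<in> span B" using sin by (simp add: span_insert)
      then obtain t where t: "\<And>n. s n - t n *\<^sub>R b \<in> span B" by metis
      define v where "v n = s n - t n *\<^sub>R b" for n
      have vB: "v n \<in> span B" for n using t v_def by simp
      have sv: "s n = t n *\<^sub>R b + v n" for n by (simp add: v_def)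
      have cs: "Cauchy s" using sl by (rule LIMSEQ_imp_Cauchy)
      have "Cauchy t"
      proof (rule metric_CauchyI)
        fix e :: real assume "e > 0"
        then obtain M where M: "\<And>m n. m \<ge> M \<Longrightarrow> n \<ge> M \<Longrightarrow> dist (s m) (s n) < e * \<delta>"
          using cs dpos unfolding Cauchy_def by (metis mult_pos_pos)
        show "\<exists>M. \<forall>m\<ge>M. \<forall>n\<ge>M. dist (t m) (t n) < e"
        proof (intro exI allI impI)
          fix m n assume "m \<ge> M" "n \<ge> M"
          have "v m - v n \<in> span B" using vB by (simp add: span_diff)
          hence "\<bar>t m - t n\<bar> * \<delta> \<le> norm ((t m - t n) *\<^sub>R b + (v m - v n))" by (rule key)
          also have "(t m - t n) *\<^sub>R b + (v m - v n) = s m - s n"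
            by (simp add: sv algebra_simps)
          also have "norm (s m - s n) < e * \<delta>" using M[OF \<open>m \<ge> M\<close> \<open>n \<ge> M\<close>] by (simp add: dist_norm)
          finally show "dist (t m) (t n) < e" using dpos by (simp add: dist_real_def)
        qed
      qed
      then obtain t0 where t0: "t \<longlonglongrightarrow> t0" using Cauchy_convergent_iff convergent_def by blast
      have "v \<longlonglongrightarrow> l - t0 *\<^sub>R b"
        unfolding v_def by (intro tendsto_intros sl t0)
      hence "l - t0 *\<^sub>R b \<in> span B"
        using insert.IH vB closed_sequentially by blast
      thus "l \<in> span (insert b B)" by (auto simp: span_insert)
    qed
  qed
qed


lemma finite_dim_if_compact_ball:
  fixes y :: "'a::real_normed_vector"
  assumes cpt: "compact (cball y e)" and e: "e > 0"
  shows "\<exists>B::'a set. finite B \<and> span B = UNIV"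
proof -
  let ?K = "cball (0::'a) 1"
  have sub: "?K \<subseteq> (\<lambda>v. (1/e) *\<^sub>R (v - y)) ` cball y e"
  proof
    fix w :: 'a assume "w \<in> ?K"
    hence "y + e *\<^sub>R w \<in> cball y e" using e by (simp add: dist_norm)
    moreover have "w = (1/e) *\<^sub>R ((y + e *\<^sub>R w) - y)" using e by simp
    ultimately show "w \<in> (\<lambda>v. (1/e) *\<^sub>R (v - y)) ` cball y e" by blast
  qed
  have "compact ((\<lambda>v. (1/e) *\<^sub>R (v - y)) ` cball y e)"
    by (intro compact_continuous_image cpt continuous_intros)
  hence "compact (((\<lambda>v. (1/e) *\<^sub>R (v - y)) ` cball y e) \<inter> ?K)"
    by (rule compact_Int_closed) simp
  moreover have "((\<lambda>v. (1/e) *\<^sub>R (v - y)) ` cball y e) \<inter> ?K = ?K" using sub by blast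
  ultimately have K: "compact ?K" by simp
  have cov: "?K \<subseteq> \<Union> ((\<lambda>b. ball b (1/2)) ` ?K)"
  proof
    fix x assume "x \<in> ?K"
    moreover have "x \<in> ball x (1/2)" by simp
    ultimately show "x \<in> \<Union> ((\<lambda>b. ball b (1/2)) ` ?K)" by blast
  qed
  obtain B where B: "B \<subseteq> ?K" "finite B" "?K \<subseteq> \<Union> ((\<lambda>b. ball b (1/2)) ` B)"
    using compactE_image[where S="?K" and C="?K" and f="\<lambda>b. ball b (1/2)", OF K _ cov] by auto
  have approx: "\<forall>x\<in>?K. \<exists>v\<in>span B. norm (x - v) \<le> (1/2)^n" for n
  proof (induction n)
    case 0 then show ?case using span_zero[of B] by (metis diff_zero mem_cball_0 power_0)
  next
    case (Suc n)
    show ?case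
    proof
      fix x assume xK: "x \<in> ?K"
      then obtain v where v: "v \<in> span B" "norm (x - v) \<le> (1/2)^n" using Suc by blast
      define w where "w = (2^n) *\<^sub>R (x - v)"
      have "norm w = 2^n * norm (x - v)" by (simp add: w_def)
      also have "\<dots> \<le> 2^n * (1/2)^n" using v(2) by (intro mult_left_mono) auto
      also have "\<dots> = 1" by (simp add: power_one_over)
      finally have "w \<in> ?K" by simp
      then obtain b where b: "b \<in> B" "dist b w < 1/2" using B(3) by auto
      have xv: "x - v = (1/2)^n *\<^sub>R w" by (simp add: w_def power_one_over)
      have "x - (v + (1/2)^n *\<^sub>R b) = (1/2)^n *\<^sub>R (w - b)"
        using xv by (simp add: algebra_simps)
      hence "norm (x - (v + (1/2)^n *\<^sub>R b)) = (1/2)^n * norm (w - b)" by simp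
      also have "\<dots> \<le> (1/2)^n * (1/2)"
        using b(2) by (intro mult_left_mono) (auto simp: dist_norm norm_minus_commute)
      also have "\<dots> = (1/2)^Suc n" by simp
      finally have "norm (x - (v + (1/2)^n *\<^sub>R b)) \<le> (1/2)^Suc n" .
      moreover have "v + (1/2)^n *\<^sub>R b \<in> span B"
        by (intro span_add v(1) span_scale span_base b(1))
      ultimately show "\<exists>v\<in>span B. norm (x - v) \<le> (1/2)^Suc n" by blast
    qed
  qed
  have KB: "?K \<subseteq> span B"
  proof
    fix x assume xK: "x \<in> ?K"
    have "x \<in> closure (span B)"
      unfolding closure_approachable
    proof (intro allI impI)
      fix d :: real assume "d > 0"
      then obtain n where "(1/2)^n < d" using real_arch_pow_inv[of d "1/2"] by auto
      then obtain v where "v \<in> span B" "norm (x - v) \<le> (1/2)^n" using approx[of n] xK by blast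
      hence "v \<in> span B" "norm (x - v) < d" using \<open>(1/2)^n < d\<close> by linarith+
      thus "\<exists>y\<in>span B. dist y x < d" by (auto simp: dist_norm norm_minus_commute)
    qed
    thus "x \<in> span B" using closed_span_finite[OF B(2)] by (simp add: closure_closed)
  qed
  have "span B = UNIV"
  proof (intro set_eqI iffI)
    fix z :: 'a
    define c where "c = norm z + 1"
    have c: "c > 0" unfolding c_def using norm_ge_zero[of z] by linarith
    have "norm ((1/c) *\<^sub>R z) = norm z / c" using c by simp
    also have "\<dots> \<le> 1" using c unfolding c_def by (simp add: divide_le_eq_1)
    finally have "(1/c) *\<^sub>R z \<in> ?K" by simp
    hence "(1/c) *\<^sub>R z \<in> span B" using KB by blast
    hence "c *\<^sub>R ((1/c) *\<^sub>R z) \<in> span B" by (rule span_scale)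
    thus "z \<in> span B" using c by simp
  qed simp
  thus ?thesis using B(2) by blast
qed



lemma not_inf_dim:
  fixes cs :: "complex \<Rightarrow> 'a::banach \<Rightarrow> 'a"
  assumes cs: "complex_scalar cs" and B: "finite B" "span B = (UNIV::'a set)"
  shows "\<not> infinite_dim_c cs"
proof -
  have "\<forall>x. \<exists>c. x = (\<Sum>b\<in>B. cs (c b) b)"
  proof
    fix x :: 'a
    have "x \<in> range (\<lambda>u. \<Sum>v\<in>B. u v *\<^sub>R v)" using B span_finite[OF B(1)] by simp
    then obtain u where u: "x = (\<Sum>v\<in>B. u v *\<^sub>R v)" by blast
    have "x = (\<Sum>b\<in>B. cs (complex_of_real (u b)) b)"
      using u cs unfolding complex_scalar_def by simp
    thus "\<exists>c. x = (\<Sum>b\<in>B. cs (c b) b)" by (rule exI[where x="\<lambda>b. complex_of_real (u b)"])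
  qed
  thus ?thesis unfolding infinite_dim_c_def using B(1) by blast
qed

theorem theorem4p3:
  fixes cs :: "complex \<Rightarrow> 'a::banach \<Rightarrow> 'a"
    and C :: "'a \<Rightarrow> 'a" and S :: "complex \<Rightarrow> 'a \<Rightarrow> 'a" and x :: 'a
  assumes "complex_scalar cs"
    and "infinite_dim_c cs"
    and "entire_C_reg_group cs C S"
    and "closure (range C) = UNIV"
    and "supercyclic_vec cs S x"
  shows "(\<forall>z. S z x \<noteq> 0) \<and>
         (\<forall>\<omega>0. closure {cs \<alpha> (S z x) | \<alpha> z. cmod z > cmod \<omega>0} = UNIV)"
proof -
  note cs = assms(1)
  interpret bb: bounded_bilinear cs by (rule cs_bilinear[OF cs])
  have CC: "bounded_clinear_op cs C" "\<And>z. bounded_clinear_op cs (S z)" "S 0 = C"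
    "\<And>z w. S (z + w) \<circ> C = S z \<circ> S w" "\<And>y. entire_v cs (\<lambda>z. S z y)"
    using assms(3) unfolding entire_C_reg_group_def by auto
  have linS: "\<And>z. bounded_linear (S z)" and linC: "bounded_linear C"
    using CC(1,2) unfolding bounded_clinear_op_def by auto
  have commS: "\<And>z a v. S z (cs a v) = cs a (S z v)" and commC: "\<And>a v. C (cs a v) = cs a (C v)"
    using CC(1,2) unfolding bounded_clinear_op_def by auto
  have nz: "\<exists>v::'a. v \<noteq> 0"
  proof (rule ccontr)
    assume "\<not> (\<exists>v::'a. v \<noteq> 0)"
    hence "\<forall>v::'a. \<exists>c. v = (\<Sum>b\<in>{}. cs (c b) b)" by simp
    thus False using assms(2) unfolding infinite_dim_c_def by blast
  qed
  define A where "A = {cs \<alpha> (S z x) | \<alpha> z. True}"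
  have clA: "closure A = UNIV" using assms(5) unfolding supercyclic_vec_def A_def .
  have part1: "\<forall>z. S z x \<noteq> 0"
  proof (intro allI notI)
    fix z0 assume h: "S z0 x = 0"
    have Su: "S u (C x) = 0" for u
    proof -
      have "(S ((u - z0) + z0) \<circ> C) x = (S (u - z0) \<circ> S z0) x" using CC(4) by metis
      thus ?thesis using h linear_0[OF bounded_linear.linear[OF linS]] by simp
    qed
    have CS: "C (S u x) = S u (C x)" for u
    proof -
      have "(S (0 + u) \<circ> C) x = (S 0 \<circ> S u) x" using CC(4) by metis
      thus ?thesis using CC(3) by simp
    qed
    have "A \<subseteq> {v. C v = 0}"
      unfolding A_def using CS Su commC bb.zero_right by auto
    moreover have "closed {v. C v = 0}"
      by (intro closed_Collect_eq linear_continuous_on linC continuous_on_const)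
    ultimately have "closure A \<subseteq> {v. C v = 0}" by (rule closure_minimal)
    hence C0: "\<And>v. C v = 0" using clA by auto
    hence "range C = {0}" by auto
    hence "closure (range C) = {0}" by simp
    thus False using assms(4) nz by auto
  qed
  have part2: "closure {cs \<alpha> (S z x) | \<alpha> z. cmod z > cmod \<omega>0} = UNIV" for \<omega>0
  proof -
    define r where "r = cmod \<omega>0"
    define f where "f = (\<lambda>z. S z x)"
    have fc: "continuous_on UNIV f" unfolding f_def by (rule cont_f[OF cs CC(5)])
    define E where "E = {cs \<alpha> (f z) | \<alpha> z. cmod z > r}"
    define D where "D = {cs \<alpha> (f z) | \<alpha> z. cmod z \<le> r}"
    have "A = D \<union> E"
    proof
      show "A \<subseteq> D \<union> E"
      proof
        fix v assume "v \<in> A"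
        then obtain \<alpha> z where v: "v = cs \<alpha> (S z x)" unfolding A_def by auto
        show "v \<in> D \<union> E"
        proof (cases "cmod z \<le> r")
          case True then have "v \<in> D" unfolding D_def f_def using v by blast
          thus ?thesis by blast
        next
          case False then have "v \<in> E" unfolding E_def f_def using v by (blast intro: leI)
          thus ?thesis by blast
        qed
      qed
      show "D \<union> E \<subseteq> A" unfolding A_def D_def E_def f_def by blast
    qed
    hence DE: "closure D \<union> closure E = UNIV" using clA by (simp add: closure_Un)
    have "closure E = UNIV"
    proof (rule ccontr)
      assume "closure E \<noteq> UNIV"
      then obtain y where y: "y \<notin> closure E" by auto
      have "open (- closure E)" by auto
      then obtain \<epsilon> where \<epsilon>: "\<epsilon> > 0" "ball y \<epsilon> \<subseteq> - closure E"
        using y open_contains_ball by blast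
      hence ballD: "ball y \<epsilon> \<subseteq> closure D" using DE by auto
      have "continuous_on (cball 0 r) (\<lambda>z. norm (f z))"
        by (intro continuous_on_norm continuous_on_subset[OF fc]) auto
      then obtain z1 where z1: "z1 \<in> cball 0 r" "\<And>z. z \<in> cball 0 r \<Longrightarrow> norm (f z1) \<le> norm (f z)"
        using continuous_attains_inf[of "cball 0 r" "\<lambda>z. norm (f z)"] r_def by auto
      define m where "m = norm (f z1)"
      have m: "m > 0" unfolding m_def f_def using part1 by simp
      define R where "R = norm y + \<epsilon>"
      define T where "T = (\<lambda>p. cs (fst p) (f (snd p))) ` (cball 0 (R/m) \<times> cball 0 r)"
      have "continuous_on (cball 0 (R/m) \<times> cball 0 r) (\<lambda>p. cs (fst p) (f (snd p)))"
        by (intro bb.continuous_on continuous_on_fst continuous_on_id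
            continuous_on_compose2[OF fc continuous_on_snd]) auto
      hence Tc: "compact T" unfolding T_def
        by (intro compact_continuous_image compact_Times compact_cball)
      have sub: "cball y (\<epsilon>/2) \<subseteq> T"
      proof
        fix p assume p: "p \<in> cball y (\<epsilon>/2)"
        have "p \<in> closure T"
          unfolding closure_approachable
        proof (intro allI impI)
          fix \<delta> :: real assume "\<delta> > 0"
          define \<delta>' where "\<delta>' = min \<delta> (\<epsilon>/2)"
          have "\<delta>' > 0" using \<open>\<delta> > 0\<close> \<epsilon> by (simp add: \<delta>'_def)
          have "p \<in> closure D" using p ballD \<epsilon> by auto
          then obtain d where d: "d \<in> D" "dist d p < \<delta>'"
            using \<open>\<delta>' > 0\<close> unfolding closure_approachable by blast
          then obtain \<alpha> z where az: "d = cs \<alpha> (f z)" "cmod z \<le> r" unfolding D_def by auto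
          have t1: "norm d \<le> norm y + norm (d - y)" using norm_triangle_ineq[of y "d - y"] by simp
          have t2: "norm (d - y) \<le> norm (d - p) + norm (p - y)" using norm_triangle_ineq[of "d-p" "p-y"] by simp
          have "norm d \<le> norm y + dist y p + dist p d" using t1 t2
            by (simp add: dist_norm norm_minus_commute)
          also have "\<dots> < norm y + \<epsilon>" using p d(2) \<delta>'_def by (auto simp: dist_commute)
          finally have nd: "norm d < R" unfolding R_def .
          have "cmod \<alpha> * m \<le> cmod \<alpha> * norm (f z)"
            using z1(2)[of z] az(2) by (intro mult_left_mono) (auto simp: m_def)
          also have "\<dots> = norm d" using az(1) cs unfolding complex_scalar_def by simp
          finally have "cmod \<alpha> \<le> R / m" using nd m by (simp add: pos_le_divide_eq)
          hence "d \<in> T" unfolding T_def using az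
            by (auto intro!: image_eqI[where x="(\<alpha>, z)"])
          thus "\<exists>t\<in>T. dist t p < \<delta>" using d(2) \<delta>'_def by force
        qed
        thus "p \<in> T" using Tc by (simp add: compact_imp_closed closure_closed)
      qed
      have "compact (T \<inter> cball y (\<epsilon>/2))" by (rule compact_Int_closed[OF Tc]) simp
      moreover have "T \<inter> cball y (\<epsilon>/2) = cball y (\<epsilon>/2)" using sub by blast
      ultimately have "compact (cball y (\<epsilon>/2))" by simp
      then obtain B :: "'a set" where "finite B" "span B = UNIV"
        using finite_dim_if_compact_ball[of y "\<epsilon>/2"] \<epsilon> by auto
      thus False using not_inf_dim[OF cs] assms(2) by blast
    qed
    thus ?thesis unfolding E_def f_def r_def .
  qed
  show ?thesis using part1 part2 by blast
qed


end
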